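(* Let $\Im$ be a finite simplicial graph with vertex set $X$ in which every closed path has even length, and let $G$ (resp. $M$) be the right-angled Artin group (resp. monoid) presented by generators $X$ and relations $ab=ba$ for each edge $a-b$ of $\Im$. Colour the vertices of $\Im$ black and white so that adjacent vertices have different colours; let $B$, $W$ be the sets of black and white vertices. Choose a total order on $X\cup X^{-1}$ in which every element of $B\cup B^{-1}$ is greater than every element of $W\cup W^{-1}$, and let $\Re$ be the rewriting system on $X\cup X^{-1}$ consisting of the free reduction rules $xx^{-1}\rightarrow1$, $x^{-1}x\rightarrow1$ ($x\in X$) together with the rules $a^{\gamma}b^{\epsilon}\rightarrow b^{\epsilon}a^{\gamma}$ for every edge $a-b$ of $\Im$ with $a\in B$, $b\in W$, and all $\gamma,\epsilon\in\{1,-1\}$ (these rules are oriented according to the length-lexicographical order induced by the chosen total order). Then $\Re$ is a finite complete rewriting system for $G$, it satisfies the condition $C^{+}$, and $\Re^{+}=\{ab\rightarrow ba : a-b\text{ an edge},\ a\in B,\ b\in W\}$ is a rewriting system for $M$ (i.e. $M\cong X^{*}/\equiv_{\Re^{+}}$).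
   Context: A rewriting system on an alphabet $\Sigma$ is a set of rules $l\rightarrow r$ in $\Sigma^{*}\times\Sigma^{*}$; $ulv$ reduces to $urv$. Complete means terminating (no infinite reduction chains) and confluent (words with a common ancestor under $\rightarrow^{*}$ have a common descendant). A rewriting system for $G$ is one on $X\cup X^{-1}$ whose generated congruence equals that generated by the defining relations of $G$ together with $xx^{-1}=1$, $x^{-1}x=1$ ($x\in X$). A word is positive if it lies in $X^{*}$ (empty word included). $\Re^{+}$ is the set of rules of $\Re$ with positive left-hand side. $\Re$ satisfies $C^{+}$ if $\Re^{+}\neq\emptyset$ and every rule with positive left-hand side has positive right-hand side. $\equiv_{\Re^{+}}$ is the congruence on $X^{*}$ generated by $\Re^{+}$. *)

theory Defs
  imports Main
begin

text \<open>Letters of X \<union> X^-1: a pair (x, True) is the generator x, (x, False) is x^-1.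
  Words are lists of letters; a rule l \<rightarrow> r is a pair (l, r).\<close>

type_synonym 'a letter = "'a \<times> bool"
type_synonym 'a word = "'a letter list"
type_synonym 'a rule = "'a word \<times> 'a word"

definition rstep :: "'a rule set \<Rightarrow> ('a word \<times> 'a word) set" where
  "rstep R = {(u @ l @ v, u @ r @ v) | u l r v. (l, r) \<in> R}"

definition terminating :: "'a rule set \<Rightarrow> bool" where
  "terminating R \<longleftrightarrow> \<not> (\<exists>f :: nat \<Rightarrow> 'a word. \<forall>i. (f i, f (Suc i)) \<in> rstep R)"

definition confluent :: "'a rule set \<Rightarrow> bool" where
  "confluent R \<longleftrightarrow> (\<forall>u v w. (u, v) \<in> (rstep R)\<^sup>* \<and> (u, w) \<in> (rstep R)\<^sup>* \<longrightarrow>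
      (\<exists>z. (v, z) \<in> (rstep R)\<^sup>* \<and> (w, z) \<in> (rstep R)\<^sup>*))"

definition complete :: "'a rule set \<Rightarrow> bool" where
  "complete R \<longleftrightarrow> terminating R \<and> confluent R"

definition congr_on :: "'a word set \<Rightarrow> 'a rule set \<Rightarrow> ('a word \<times> 'a word) set" where
  "congr_on S R = ((rstep R \<inter> (S \<times> S)) \<union> (rstep R \<inter> (S \<times> S))\<inverse>)\<^sup>* \<inter> (S \<times> S)"

definition letters :: "'a set \<Rightarrow> 'a letter set" where
  "letters X = X \<times> UNIV"

definition pos_letters :: "'a set \<Rightarrow> 'a letter set" where
  "pos_letters X = X \<times> {True}"

definition free_rules :: "'a set \<Rightarrow> 'a rule set" where
  "free_rules X = {([(x, True), (x, False)], []) | x. x \<in> X}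
                \<union> {([(x, False), (x, True)], []) | x. x \<in> X}"

definition raag_relations :: "'a set \<Rightarrow> ('a \<Rightarrow> 'a \<Rightarrow> bool) \<Rightarrow> 'a rule set" where
  "raag_relations X E = {([(a, True), (b, True)], [(b, True), (a, True)]) | a b.
       a \<in> X \<and> b \<in> X \<and> E a b}"

definition rewriting_system_for_group :: "'a set \<Rightarrow> 'a rule set \<Rightarrow> 'a rule set \<Rightarrow> bool" where
  "rewriting_system_for_group X Rel R \<longleftrightarrow>
     R \<subseteq> lists (letters X) \<times> lists (letters X) \<and>
     congr_on (lists (letters X)) R = congr_on (lists (letters X)) (Rel \<union> free_rules X)"

definition rewriting_system_for_monoid :: "'a set \<Rightarrow> 'a rule set \<Rightarrow> 'a rule set \<Rightarrow> bool" where
  "rewriting_system_for_monoid X Rel R \<longleftrightarrow>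
     R \<subseteq> lists (pos_letters X) \<times> lists (pos_letters X) \<and>
     congr_on (lists (pos_letters X)) R = congr_on (lists (pos_letters X)) Rel"

definition positive :: "'a set \<Rightarrow> 'a word \<Rightarrow> bool" where
  "positive X w \<longleftrightarrow> w \<in> lists (pos_letters X)"

definition pos_part :: "'a set \<Rightarrow> 'a rule set \<Rightarrow> 'a rule set" where
  "pos_part X R = {(l, r) \<in> R. positive X l}"

definition C_plus :: "'a set \<Rightarrow> 'a rule set \<Rightarrow> bool" where
  "C_plus X R \<longleftrightarrow> pos_part X R \<noteq> {} \<and> (\<forall>(l, r) \<in> pos_part X R. positive X r)"

definition simplicial_graph :: "'a set \<Rightarrow> ('a \<Rightarrow> 'a \<Rightarrow> bool) \<Rightarrow> bool" where
  "simplicial_graph X E \<longleftrightarrow> finite X \<and> (\<forall>a b. E a b \<longrightarrow> a \<in> X \<and> b \<in> X)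
     \<and> (\<forall>a b. E a b \<longrightarrow> E b a) \<and> (\<forall>a. \<not> E a a)"

definition closed_paths_even :: "('a \<Rightarrow> 'a \<Rightarrow> bool) \<Rightarrow> bool" where
  "closed_paths_even E \<longleftrightarrow> (\<forall>(vs :: 'a list). vs \<noteq> [] \<and> hd vs = last vs \<and>
     (\<forall>i. Suc i < length vs \<longrightarrow> E (vs ! i) (vs ! Suc i)) \<longrightarrow> even (length vs - 1))"

text \<open>The rewriting system of the proposition; col x = True means x is black.\<close>
definition raag_rules :: "'a set \<Rightarrow> ('a \<Rightarrow> 'a \<Rightarrow> bool) \<Rightarrow> ('a \<Rightarrow> bool) \<Rightarrow> 'a rule set" where
  "raag_rules X E col = free_rules X \<union>
     {([(a, g), (b, e)], [(b, e), (a, g)]) | a b g e.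
        E a b \<and> a \<in> X \<and> col a \<and> b \<in> X \<and> \<not> col b}"

end

theory Submission
  imports Defs
begin

lemma rstepI: "(l,r) \<in> R \<Longrightarrow> w = u@l@v \<Longrightarrow> w' = u@r@v \<Longrightarrow> (w,w') \<in> rstep R"
  unfolding rstep_def by blast

lemma rstep_ctx: "(x,y) \<in> rstep R \<Longrightarrow> (u@x@v, u@y@v) \<in> rstep R"
  unfolding rstep_def by clarsimp (metis append.assoc)

lemma rtrancl_ctx: "(x,y) \<in> (rstep R)\<^sup>* \<Longrightarrow> (u@x@v, u@y@v) \<in> (rstep R)\<^sup>*"
proof (induction rule: rtrancl_induct)
  case base then show ?case by simp
next
  case (step y z) then show ?case by (meson rstep_ctx rtrancl.simps)
qed

definition nwh :: "('a \<Rightarrow> bool) \<Rightarrow> 'a word \<Rightarrow> nat" where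
  "nwh col w = length (filter (\<lambda>y. \<not> col (fst y)) w)"
definition nbl :: "('a \<Rightarrow> bool) \<Rightarrow> 'a word \<Rightarrow> nat" where
  "nbl col w = length (filter (\<lambda>y. col (fst y)) w)"

fun ninv :: "('a \<Rightarrow> bool) \<Rightarrow> 'a word \<Rightarrow> nat" where
  "ninv col [] = 0"
| "ninv col (x#xs) = (if col (fst x) then nwh col xs else 0) + ninv col xs"

lemma ninv_append: "ninv col (u@v) = ninv col u + ninv col v + nbl col u * nwh col v"
  by (induction u) (auto simp: nbl_def nwh_def algebra_simps)

definition mu :: "('a \<Rightarrow> bool) \<Rightarrow> 'a word \<Rightarrow> nat" where
  "mu col w = length w + ninv col w"

lemma rule_cases:
  assumes "(l,r) \<in> raag_rules X E col"
  shows "(\<exists>x s. x \<in> X \<and> l = [(x,s),(x,\<not>s)] \<and> r = []) \<or>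
         (\<exists>a b g e. l = [(a,g),(b,e)] \<and> r = [(b,e),(a,g)] \<and> E a b \<and> a \<in> X \<and> col a \<and> b \<in> X \<and> \<not> col b)"
  using assms unfolding raag_rules_def free_rules_def by auto

lemma free_in: "x \<in> X \<Longrightarrow> ([(x,s),(x,\<not>s)], []) \<in> raag_rules X E col"
  unfolding raag_rules_def free_rules_def by (cases s) auto

lemma swap_in: "E a b \<Longrightarrow> a \<in> X \<Longrightarrow> col a \<Longrightarrow> b \<in> X \<Longrightarrow> \<not> col b \<Longrightarrow>
   ([(a,g),(b,e)], [(b,e),(a,g)]) \<in> raag_rules X E col"
  unfolding raag_rules_def by blast

lemma step_dec:
  assumes "(w,w') \<in> rstep (raag_rules X E col)"
  shows "mu col w' < mu col w"
proof -
  obtain u l r v where w: "w = u@l@v" "w' = u@r@v" and lr: "(l,r) \<in> raag_rules X E col"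
    using assms unfolding rstep_def by blast
  from rule_cases[OF lr] show ?thesis
  proof
    assume "\<exists>x s. x \<in> X \<and> l = [(x,s),(x,\<not>s)] \<and> r = []"
    then obtain x s where "l = [(x,s),(x,\<not>s)]" "r = []" by blast
    moreover have "nbl col u * nwh col v \<le> nbl col u * nwh col (l @ v)"
      by (rule mult_le_mono2) (simp add: nwh_def)
    ultimately show ?thesis using w
      by (simp add: mu_def ninv_append nbl_def nwh_def)
  next
    assume "\<exists>a b g e. l = [(a,g),(b,e)] \<and> r = [(b,e),(a,g)] \<and> E a b \<and> a \<in> X \<and> col a \<and> b \<in> X \<and> \<not> col b"
    then obtain a b g e where "l = [(a,g),(b,e)]" "r = [(b,e),(a,g)]" "col a" "\<not> col b" by blast
    then show ?thesis using w
      by (simp add: mu_def ninv_append nbl_def nwh_def)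
  qed
qed

lemma term_R: "terminating (raag_rules X E col)"
  unfolding terminating_def
proof
  assume "\<exists>f. \<forall>i. (f i, f (Suc i)) \<in> rstep (raag_rules X E col)"
  then obtain f where f: "\<forall>i. (f i, f (Suc i)) \<in> rstep (raag_rules X E col)" by blast
  have "mu col (f i) + i \<le> mu col (f 0)" for i
  proof (induction i)
    case (Suc i) then show ?case using step_dec[OF f[rule_format, of i]] by simp
  qed simp
  from this[of "Suc (mu col (f 0))"] show False by simp
qed

lemma wf_R: "wf {(y,x). (x,y) \<in> rstep (raag_rules X E col)}"
  by (rule wf_subset[OF wf_measure[of "mu col"]]) (auto simp: step_dec)

lemma determ:
  assumes "(l,r1) \<in> raag_rules X E col" "(l,r2) \<in> raag_rules X E col"
  shows "r1 = r2"
  using rule_cases[OF assms(1)] rule_cases[OF assms(2)] by auto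

lemma crit:
  assumes "([p,q],r1) \<in> raag_rules X E col" "([q,s],r2) \<in> raag_rules X E col"
  shows "\<exists>z. (r1@[s], z) \<in> (rstep (raag_rules X E col))\<^sup>* \<and> (p#r2, z) \<in> (rstep (raag_rules X E col))\<^sup>*"
  using rule_cases[OF assms(1)]
proof
  assume "\<exists>x s. x \<in> X \<and> [p,q] = [(x,s),(x,\<not>s)] \<and> r1 = []"
  then obtain x t where 1: "x \<in> X" "p = (x,t)" "q = (x,\<not>t)" "r1 = []" by auto
  from rule_cases[OF assms(2)] show ?thesis
  proof
    assume "\<exists>x s'. x \<in> X \<and> [q,s] = [(x,s'),(x,\<not>s')] \<and> r2 = []"
    then show ?thesis using 1 by auto
  next
    assume "\<exists>a b g e. [q,s] = [(a,g),(b,e)] \<and> r2 = [(b,e),(a,g)] \<and> E a b \<and> a \<in> X \<and> col a \<and> b \<in> X \<and> \<not> col b"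
    then obtain a b g e where 2: "q = (a,g)" "s = (b,e)" "r2 = [(b,e),(a,g)]" "E a b" "a \<in> X" "col a" "b \<in> X" "\<not> col b" by auto
    have "(p#r2, [(b,e),(a,\<not>g),(a,g)]) \<in> rstep (raag_rules X E col)"
      by (rule rstepI[OF swap_in[where E=E and a=a and b=b and X=X and col=col and g="\<not>g" and e=e, OF 2(4-8)], of _ "[]" "[(a,g)]"]) (use 1 2 in auto)
    moreover have "([(b,e),(a,\<not>g),(a,g)], [(b,e)]) \<in> rstep (raag_rules X E col)"
      using rstepI[OF free_in[OF 2(5), of "\<not>g" E col], of _ "[(b,e)]" "[]"] by simp
    ultimately show ?thesis using 1 2 by (intro exI[of _ "[(b,e)]"]) auto
  qed
next
  assume "\<exists>a b g e. [p,q] = [(a,g),(b,e)] \<and> r1 = [(b,e),(a,g)] \<and> E a b \<and> a \<in> X \<and> col a \<and> b \<in> X \<and> \<not> col b"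
  then obtain a b g e where 1: "p = (a,g)" "q = (b,e)" "r1 = [(b,e),(a,g)]" "E a b" "a \<in> X" "col a" "b \<in> X" "\<not> col b" by auto
  from rule_cases[OF assms(2)] show ?thesis
  proof
    assume "\<exists>x s'. x \<in> X \<and> [q,s] = [(x,s'),(x,\<not>s')] \<and> r2 = []"
    then have 2: "s = (b,\<not>e)" "r2 = []" using 1 by auto
    have "(r1@[s], [(b,e),(b,\<not>e),(a,g)]) \<in> rstep (raag_rules X E col)"
      by (rule rstepI[OF swap_in[where E=E and a=a and b=b and X=X and col=col and g=g and e="\<not>e", OF 1(4-8)], of _ "[(b,e)]" "[]"]) (use 1 2 in auto)
    moreover have "([(b,e),(b,\<not>e),(a,g)], [(a,g)]) \<in> rstep (raag_rules X E col)"
      using rstepI[OF free_in[OF 1(7), of "e" E col], of _ "[]" "[(a,g)]"] by simp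
    ultimately show ?thesis using 1 2 by (intro exI[of _ "[(a,g)]"]) auto
  next
    assume "\<exists>a b g e. [q,s] = [(a,g),(b,e)] \<and> r2 = [(b,e),(a,g)] \<and> E a b \<and> a \<in> X \<and> col a \<and> b \<in> X \<and> \<not> col b"
    then show ?thesis using 1 by auto
  qed
qed

lemma lc_aux:
  assumes w1: "w = u1@[p1,q1]@x1" and w2: "w = u2@[p2,q2]@x2"
    and r1: "([p1,q1],r1) \<in> raag_rules X E col" and r2: "([p2,q2],r2) \<in> raag_rules X E col"
    and len: "length u1 \<le> length u2"
  shows "\<exists>z. (u1@r1@x1, z) \<in> (rstep (raag_rules X E col))\<^sup>* \<and> (u2@r2@x2, z) \<in> (rstep (raag_rules X E col))\<^sup>*"
proof -
  let ?S = "rstep (raag_rules X E col)"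
  obtain m where m: "u2 = u1@m" "m@[p2,q2]@x2 = [p1,q1]@x1"
  proof -
    have "u1@([p1,q1]@x1) = u2@([p2,q2]@x2)" using w1 w2 by simp
    then obtain us where us: "u1 = u2 @ us \<and> us @ ([p1,q1]@x1) = [p2,q2]@x2 \<or> u1 @ us = u2 \<and> [p1,q1]@x1 = us @ ([p2,q2]@x2)"
      unfolding append_eq_append_conv2 by blast
    then show ?thesis
    proof
      assume h: "u1 = u2 @ us \<and> us @ ([p1,q1]@x1) = [p2,q2]@x2"
      then have "us = []" using len by simp
      then have "u2 = u1 @ []" "[] @ [p2,q2]@x2 = [p1,q1]@x1" using h by simp_all
      then show ?thesis by (rule that)
    next
      assume h: "u1 @ us = u2 \<and> [p1,q1]@x1 = us @ ([p2,q2]@x2)"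
      then have "u2 = u1 @ us" "us @ [p2,q2]@x2 = [p1,q1]@x1" by simp_all
      then show ?thesis by (rule that)
    qed
  qed
  show ?thesis
  proof (cases m)
    case Nil
    then have e: "p1 = p2" "q1 = q2" "x1 = x2" "u2 = u1" using m by simp_all
    then have "r1 = r2" using determ[OF r1] r2 by simp
    then show ?thesis using e by (intro exI[of _ "u1@r1@x1"]) simp
  next
    case (Cons c m')
    show ?thesis
    proof (cases m')
      case Nil
      then have e: "c = p1" "p2 = q1" "x1 = q2 # x2" using m Cons by simp_all
      have r2': "([q1,q2],r2) \<in> raag_rules X E col" using r2 e by simp
      obtain z0 where z0: "(r1@[q2], z0) \<in> ?S\<^sup>*" "(p1#r2, z0) \<in> ?S\<^sup>*"
        using crit[OF r1 r2'] by blast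
      have A: "u1@r1@x1 = u1@(r1@[q2])@x2" using e by simp
      have B: "u2@r2@x2 = u1@(p1#r2)@x2" using e m Cons Nil by simp
      show ?thesis unfolding A B
        by (rule exI[of _ "u1@z0@x2"], rule conjI, rule rtrancl_ctx[OF z0(1)], rule rtrancl_ctx[OF z0(2)])
    next
      case (Cons d m'')
      then have e: "c = p1" "d = q1" "x1 = m''@[p2,q2]@x2" "u2 = u1@[p1,q1]@m''"
        using m \<open>m = c # m'\<close> by simp_all
      have s1: "(u1@r1@x1, u1@r1@m''@r2@x2) \<in> ?S"
        by (rule rstepI[OF r2, of _ "u1@r1@m''" x2]) (simp_all add: e)
      have s2: "(u2@r2@x2, u1@r1@m''@r2@x2) \<in> ?S"
        by (rule rstepI[OF r1, of _ u1 "m''@r2@x2"]) (simp_all add: e)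
      show ?thesis
        by (rule exI[of _ "u1@r1@m''@r2@x2"], rule conjI, rule r_into_rtrancl[OF s1], rule r_into_rtrancl[OF s2])
    qed
  qed
qed

lemma rule_len2: "(l,r) \<in> raag_rules X E col \<Longrightarrow> \<exists>p q. l = [p,q]"
  using rule_cases by blast

lemma local_conf:
  assumes "(w,v1) \<in> rstep (raag_rules X E col)" "(w,v2) \<in> rstep (raag_rules X E col)"
  shows "\<exists>z. (v1, z) \<in> (rstep (raag_rules X E col))\<^sup>* \<and> (v2, z) \<in> (rstep (raag_rules X E col))\<^sup>*"
proof -
  obtain u1 l1 r1 x1 where a: "w = u1@l1@x1" "v1 = u1@r1@x1" "(l1,r1) \<in> raag_rules X E col"
    using assms(1) unfolding rstep_def by blast
  obtain u2 l2 r2 x2 where b: "w = u2@l2@x2" "v2 = u2@r2@x2" "(l2,r2) \<in> raag_rules X E col"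
    using assms(2) unfolding rstep_def by blast
  obtain p1 q1 where l1: "l1 = [p1,q1]" using rule_len2[OF a(3)] by blast
  obtain p2 q2 where l2: "l2 = [p2,q2]" using rule_len2[OF b(3)] by blast
  show ?thesis
  proof (cases "length u1 \<le> length u2")
    case True
    from lc_aux[OF a(1)[unfolded l1] b(1)[unfolded l2] a(3)[unfolded l1] b(3)[unfolded l2] True]
    obtain z where "(u1@r1@x1, z) \<in> (rstep (raag_rules X E col))\<^sup>*" "(u2@r2@x2, z) \<in> (rstep (raag_rules X E col))\<^sup>*" by blast
    then show ?thesis unfolding a(2) b(2) by blast
  next
    case False
    then have F: "length u2 \<le> length u1" by simp
    from lc_aux[OF b(1)[unfolded l2] a(1)[unfolded l1] b(3)[unfolded l2] a(3)[unfolded l1] F]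
    obtain z where "(u2@r2@x2, z) \<in> (rstep (raag_rules X E col))\<^sup>*" "(u1@r1@x1, z) \<in> (rstep (raag_rules X E col))\<^sup>*" by blast
    then show ?thesis unfolding a(2) b(2) by blast
  qed
qed

lemma conf_R: "confluent (raag_rules X E col)"
proof -
  let ?S = "rstep (raag_rules X E col)"
  have main: "\<forall>v w. (u,v) \<in> ?S\<^sup>* \<and> (u,w) \<in> ?S\<^sup>* \<longrightarrow> (\<exists>z. (v,z) \<in> ?S\<^sup>* \<and> (w,z) \<in> ?S\<^sup>*)" for u
  proof (induction u rule: wf_induct[OF wf_R[of X E col]])
    case (1 x)
    show ?case
    proof (intro allI impI)
      fix v w assume vw: "(x,v) \<in> ?S\<^sup>* \<and> (x,w) \<in> ?S\<^sup>*"
      show "\<exists>z. (v,z) \<in> ?S\<^sup>* \<and> (w,z) \<in> ?S\<^sup>*"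
      proof (cases "x = v \<or> x = w")
        case True
        then show ?thesis
        proof
          assume "x = v" then show ?thesis using vw by (intro exI[of _ w]) simp
        next
          assume "x = w" then show ?thesis using vw by (intro exI[of _ v]) simp
        qed
      next
        case False
        have xv: "(x,v) \<in> ?S\<^sup>*" "(x,w) \<in> ?S\<^sup>*" using vw by simp_all
        obtain y1 where y1: "(x,y1) \<in> ?S" "(y1,v) \<in> ?S\<^sup>*"
        proof -
          from xv(1) show ?thesis
          proof (cases rule: converse_rtranclE)
            case base then show ?thesis using False by simp
          next
            case (step y) then show ?thesis using that by blast
          qed
        qed
        obtain z1 where z1: "(x,z1) \<in> ?S" "(z1,w) \<in> ?S\<^sup>*"
        proof -
          from xv(2) show ?thesis
          proof (cases rule: converse_rtranclE)
            case base then show ?thesis using False by simp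
          next
            case (step y) then show ?thesis using that by blast
          qed
        qed
        obtain u where u: "(y1,u) \<in> ?S\<^sup>*" "(z1,u) \<in> ?S\<^sup>*" using local_conf[OF y1(1) z1(1)] by blast
        have IH: "\<exists>z. (v',z) \<in> ?S\<^sup>* \<and> (w',z) \<in> ?S\<^sup>*"
          if "(x,y) \<in> ?S" "(y,v') \<in> ?S\<^sup>*" "(y,w') \<in> ?S\<^sup>*" for y v' w'
        proof -
          have r: "(y,x) \<in> {(y,x). (x,y) \<in> ?S}" using that(1) by simp
          have q: "\<forall>v w. (y,v) \<in> ?S\<^sup>* \<and> (y,w) \<in> ?S\<^sup>* \<longrightarrow> (\<exists>z. (v,z) \<in> ?S\<^sup>* \<and> (w,z) \<in> ?S\<^sup>*)"
            by (rule mp[OF spec[OF 1] r])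
          show ?thesis by (rule mp[OF spec[OF spec[OF q]] conjI[OF that(2) that(3)]])
        qed
        obtain t where t: "(v,t) \<in> ?S\<^sup>*" "(u,t) \<in> ?S\<^sup>*"
          using IH[OF y1(1) y1(2) u(1)] by blast
        have "(z1,t) \<in> ?S\<^sup>*" using u(2) t(2) by (rule rtrancl_trans)
        then obtain s where s: "(w,s) \<in> ?S\<^sup>*" "(t,s) \<in> ?S\<^sup>*"
          using IH[OF z1(1) z1(2)] by blast
        show ?thesis by (rule exI[of _ s], rule conjI, rule rtrancl_trans[OF t(1) s(2)], rule s(1))
      qed
    qed
  qed
  show ?thesis unfolding confluent_def
  proof (intro allI impI)
    fix u v w assume h: "(u,v) \<in> ?S\<^sup>* \<and> (u,w) \<in> ?S\<^sup>*"
    show "\<exists>z. (v,z) \<in> ?S\<^sup>* \<and> (w,z) \<in> ?S\<^sup>*"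
      by (rule mp[OF main[of u, THEN spec, THEN spec] h])
  qed
qed


definition Es :: "'a word set \<Rightarrow> 'a rule set \<Rightarrow> ('a word \<times> 'a word) set" where
  "Es S R = (rstep R \<inter> (S \<times> S)) \<union> (rstep R \<inter> (S \<times> S))\<inverse>"

lemma congr_alt: "congr_on S R = (Es S R)\<^sup>* \<inter> (S \<times> S)"
  by (simp add: congr_on_def Es_def)

lemma Es_sym: "(Es S R)\<inverse> = Es S R"
  unfolding Es_def by auto

lemma congr_refl: "x \<in> S \<Longrightarrow> (x,x) \<in> congr_on S R"
  by (simp add: congr_alt)

lemma congr_sym: "(x,y) \<in> congr_on S R \<Longrightarrow> (y,x) \<in> congr_on S R"
proof -
  assume "(x,y) \<in> congr_on S R"
  then have h: "(x,y) \<in> (Es S R)\<^sup>*" "x \<in> S" "y \<in> S" by (simp_all add: congr_alt)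
  have "(y,x) \<in> ((Es S R)\<inverse>)\<^sup>*" using h(1) by (rule rtrancl_converseI)
  then have "(y,x) \<in> (Es S R)\<^sup>*" by (simp only: Es_sym)
  then show ?thesis using h by (simp add: congr_alt)
qed

lemma congr_trans: "(x,y) \<in> congr_on S R \<Longrightarrow> (y,z) \<in> congr_on S R \<Longrightarrow> (x,z) \<in> congr_on S R"
proof -
  assume a: "(x,y) \<in> congr_on S R" "(y,z) \<in> congr_on S R"
  then have h: "(x,y) \<in> (Es S R)\<^sup>*" "x \<in> S" "(y,z) \<in> (Es S R)\<^sup>*" "z \<in> S" by (simp_all add: congr_alt)
  have "(x,z) \<in> (Es S R)\<^sup>*" using h(1) h(3) by (rule rtrancl_trans)
  then show ?thesis using h by (simp add: congr_alt)
qed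

lemma congr_step: "(x,y) \<in> rstep R \<Longrightarrow> x \<in> S \<Longrightarrow> y \<in> S \<Longrightarrow> (x,y) \<in> congr_on S R"
  unfolding congr_alt Es_def by auto

lemma congr_rule: "(l,r) \<in> R \<Longrightarrow> l \<in> S \<Longrightarrow> r \<in> S \<Longrightarrow> (l,r) \<in> congr_on S R"
  by (rule congr_step[OF rstepI[of l r R l "[]" "[]"]]) auto

lemma Es_ctx: "(x,y) \<in> Es (lists L) R \<Longrightarrow> u \<in> lists L \<Longrightarrow> v \<in> lists L \<Longrightarrow>
   (u@x@v, u@y@v) \<in> Es (lists L) R"
proof -
  assume a: "(x,y) \<in> Es (lists L) R" "u \<in> lists L" "v \<in> lists L"
  show ?thesis
  proof (cases "(x,y) \<in> rstep R")
    case True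
    then have "(u@x@v, u@y@v) \<in> rstep R" by (rule rstep_ctx)
    then show ?thesis using a unfolding Es_def by auto
  next
    case False
    then have "(y,x) \<in> rstep R" using a(1) unfolding Es_def by auto
    then have "(u@y@v, u@x@v) \<in> rstep R" by (rule rstep_ctx)
    then show ?thesis using a unfolding Es_def by auto
  qed
qed

lemma congr_ctx: "(x,y) \<in> congr_on (lists L) R \<Longrightarrow> u \<in> lists L \<Longrightarrow> v \<in> lists L \<Longrightarrow>
   (u@x@v, u@y@v) \<in> congr_on (lists L) R"
proof -
  assume a: "(x,y) \<in> congr_on (lists L) R" and uv: "u \<in> lists L" "v \<in> lists L"
  then have xy: "(x,y) \<in> (Es (lists L) R)\<^sup>*" "x \<in> lists L" "y \<in> lists L" by (auto simp: congr_alt)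
  have "(u@x@v, u@y@v) \<in> (Es (lists L) R)\<^sup>*" using xy(1)
  proof (induction rule: rtrancl_induct)
    case (step y z) then show ?case using Es_ctx[OF _ uv] by (meson rtrancl.simps)
  qed simp
  then show ?thesis using xy uv by (simp add: congr_alt)
qed

lemma congr_ctx': "(x,y) \<in> congr_on (lists L) R \<Longrightarrow> u \<in> lists L \<Longrightarrow> v \<in> lists L \<Longrightarrow>
   w1 = u@x@v \<Longrightarrow> w2 = u@y@v \<Longrightarrow> (w1,w2) \<in> congr_on (lists L) R"
  using congr_ctx by blast

lemma congr_mono:
  assumes h: "\<And>l r. (l,r) \<in> R1 \<Longrightarrow> l \<in> lists L \<Longrightarrow> r \<in> lists L \<Longrightarrow> (l,r) \<in> congr_on (lists L) R2"
  shows "congr_on (lists L) R1 \<subseteq> congr_on (lists L) R2"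
proof
  fix p assume "p \<in> congr_on (lists L) R1"
  moreover obtain x y where p0: "p = (x,y)" by (cases p)
  ultimately have "(x,y) \<in> (Es (lists L) R1)\<^sup>* \<inter> (lists L \<times> lists L)" by (simp add: congr_alt)
  note xyS = this
  have p2: "(x,y) \<in> (Es (lists L) R1)\<^sup>*" by (rule IntD1[OF xyS])
  have p3: "x \<in> lists L" by (rule SigmaD1[OF IntD2[OF xyS]])
  note p = p0 p2 p3
  have one: "(a,b) \<in> congr_on (lists L) R2" if "(a,b) \<in> rstep R1 \<inter> (lists L \<times> lists L)" for a b
  proof -
    have ab: "(a,b) \<in> rstep R1" by (rule IntD1[OF that])
    have aS: "a \<in> lists L" by (rule SigmaD1[OF IntD2[OF that]])
    have bS: "b \<in> lists L" by (rule SigmaD2[OF IntD2[OF that]])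
    obtain u l r v where e: "a = u@l@v" "b = u@r@v" and lr: "(l,r) \<in> R1" using ab unfolding rstep_def by blast
    have m: "u \<in> lists L" "l \<in> lists L" "v \<in> lists L" "r \<in> lists L" using aS bS unfolding e by simp_all
    show ?thesis by (rule congr_ctx'[OF h[OF lr m(2) m(4)] m(1) m(3) e])
  qed
  have "(x,y) \<in> congr_on (lists L) R2" using p(2)
  proof (induction rule: rtrancl_induct)
    case base then show ?case using p(3) by (rule congr_refl)
  next
    case (step y z)
    have "(y,z) \<in> congr_on (lists L) R2"
    proof (cases "(y,z) \<in> rstep R1 \<inter> (lists L \<times> lists L)")
      case True then show ?thesis by (rule one)
    next
      case False
      have "(y,z) \<in> (rstep R1 \<inter> (lists L \<times> lists L)) \<union> (rstep R1 \<inter> (lists L \<times> lists L))\<inverse>"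
        using step(2) by (simp only: Es_def)
      then have "(y,z) \<in> (rstep R1 \<inter> (lists L \<times> lists L))\<inverse>"
      proof (rule UnE)
        assume "(y,z) \<in> rstep R1 \<inter> (lists L \<times> lists L)" then show ?thesis using False by (rule notE[rotated])
      qed
      then have "(z,y) \<in> rstep R1 \<inter> (lists L \<times> lists L)" by (rule converseD)
      then show ?thesis by (rule congr_sym[OF one])
    qed
    then show ?case by (rule congr_trans[OF step(3)])
  qed
  then show "p \<in> congr_on (lists L) R2" unfolding p(1) .
qed

lemma congr_eqI:
  assumes "\<And>l r. (l,r) \<in> R1 \<Longrightarrow> l \<in> lists L \<Longrightarrow> r \<in> lists L \<Longrightarrow> (l,r) \<in> congr_on (lists L) R2"
    "\<And>l r. (l,r) \<in> R2 \<Longrightarrow> l \<in> lists L \<Longrightarrow> r \<in> lists L \<Longrightarrow> (l,r) \<in> congr_on (lists L) R1"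
  shows "congr_on (lists L) R1 = congr_on (lists L) R2"
  by (rule equalityI[OF congr_mono[OF assms(1)] congr_mono[OF assms(2)]])

lemma lettersI[simp]: "((a,g) \<in> letters X) = (a \<in> X)"
  by (simp add: letters_def)

context
  fixes X :: "'a set" and E :: "'a \<Rightarrow> 'a \<Rightarrow> bool" and A :: "'a rule set"
  assumes symE: "\<And>a b. E a b \<Longrightarrow> E b a"
    and inA: "free_rules X \<union> raag_relations X E \<subseteq> A"
begin

lemma g_free: assumes x: "x \<in> X" shows "([(x,s),(x,\<not>s)], []) \<in> congr_on (lists (letters X)) A"
proof -
  have "([(x,s),(x,\<not>s)],[]) \<in> A" using inA x by (cases s) (auto simp: free_rules_def)
  then show ?thesis by (rule congr_rule) (use x in simp_all)
qed

lemma g_free': "x \<in> X \<Longrightarrow> ([], [(x,s),(x,\<not>s)]) \<in> congr_on (lists (letters X)) A"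
  by (rule congr_sym[OF g_free])

lemma g_tt: "E a b \<Longrightarrow> a \<in> X \<Longrightarrow> b \<in> X \<Longrightarrow> ([(a,True),(b,True)],[(b,True),(a,True)]) \<in> congr_on (lists (letters X)) A"
  by (rule congr_rule) (use inA in \<open>auto simp: raag_relations_def\<close>)

lemma g_ft: assumes "E a b" "a \<in> X" "b \<in> X"
  shows "([(a,False),(b,True)],[(b,True),(a,False)]) \<in> congr_on (lists (letters X)) A"
proof -
  let ?C = "congr_on (lists (letters X)) A"
  have 1: "([(a,False),(b,True)], [(a,False),(b,True),(a,True),(a,False)]) \<in> ?C"
    by (rule congr_ctx'[OF g_free'[OF assms(2), of True], of "[(a,False),(b,True)]" "[]"]) (use assms in auto)
  have 2: "([(a,False),(b,True),(a,True),(a,False)], [(a,False),(a,True),(b,True),(a,False)]) \<in> ?C"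
    by (rule congr_ctx'[OF g_tt[OF symE[OF assms(1)] assms(3,2)], of "[(a,False)]" "[(a,False)]"]) (use assms in auto)
  have 3: "([(a,False),(a,True),(b,True),(a,False)], [(b,True),(a,False)]) \<in> ?C"
    by (rule congr_ctx'[OF g_free[OF assms(2), of False], of "[]" "[(b,True),(a,False)]"]) (use assms in auto)
  show ?thesis by (rule congr_trans[OF congr_trans[OF 1 2] 3])
qed

lemma g_tf: assumes "E a b" "a \<in> X" "b \<in> X"
  shows "([(a,True),(b,False)],[(b,False),(a,True)]) \<in> congr_on (lists (letters X)) A"
proof -
  let ?C = "congr_on (lists (letters X)) A"
  have 1: "([(a,True),(b,False)], [(b,False),(b,True),(a,True),(b,False)]) \<in> ?C"
    by (rule congr_ctx'[OF g_free'[OF assms(3), of False], of "[]" "[(a,True),(b,False)]"]) (use assms in auto)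
  have 2: "([(b,False),(b,True),(a,True),(b,False)], [(b,False),(a,True),(b,True),(b,False)]) \<in> ?C"
    by (rule congr_ctx'[OF g_tt[OF symE[OF assms(1)] assms(3,2)], of "[(b,False)]" "[(b,False)]"]) (use assms in auto)
  have 3: "([(b,False),(a,True),(b,True),(b,False)], [(b,False),(a,True)]) \<in> ?C"
    by (rule congr_ctx'[OF g_free[OF assms(3), of True], of "[(b,False),(a,True)]" "[]"]) (use assms in auto)
  show ?thesis by (rule congr_trans[OF congr_trans[OF 1 2] 3])
qed

lemma g_ff: assumes "E a b" "a \<in> X" "b \<in> X"
  shows "([(a,False),(b,False)],[(b,False),(a,False)]) \<in> congr_on (lists (letters X)) A"
proof -
  let ?C = "congr_on (lists (letters X)) A"
  have 1: "([(a,False),(b,False)], [(b,False),(b,True),(a,False),(b,False)]) \<in> ?C"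
    by (rule congr_ctx'[OF g_free'[OF assms(3), of False], of "[]" "[(a,False),(b,False)]"]) (use assms in auto)
  have 2: "([(b,False),(b,True),(a,False),(b,False)], [(b,False),(a,False),(b,True),(b,False)]) \<in> ?C"
    by (rule congr_ctx'[OF g_tf[OF symE[OF assms(1)] assms(3,2)], of "[(b,False)]" "[(b,False)]"]) (use assms in auto)
  have 3: "([(b,False),(a,False),(b,True),(b,False)], [(b,False),(a,False)]) \<in> ?C"
    by (rule congr_ctx'[OF g_free[OF assms(3), of True], of "[(b,False),(a,False)]" "[]"]) (use assms in auto)
  show ?thesis by (rule congr_trans[OF congr_trans[OF 1 2] 3])
qed

lemma g_swap: "E a b \<Longrightarrow> a \<in> X \<Longrightarrow> b \<in> X \<Longrightarrow> ([(a,g),(b,e)],[(b,e),(a,g)]) \<in> congr_on (lists (letters X)) A"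
proof -
  assume h: "E a b" "a \<in> X" "b \<in> X"
  show ?thesis
  proof (cases g)
    case True
    show ?thesis
    proof (cases e)
      case True then show ?thesis using g_tt[OF h] \<open>g\<close> by simp
    next
      case False then show ?thesis using g_tf[OF h] \<open>g\<close> by simp
    qed
  next
    case gF: False
    show ?thesis
    proof (cases e)
      case True then show ?thesis using g_ft[OF h] gF by simp
    next
      case False then show ?thesis using g_ff[OF h] gF by simp
    qed
  qed
qed

end


lemma pos_part_eq:
  "pos_part X (raag_rules X E col) =
        {([(a, True), (b, True)], [(b, True), (a, True)]) | a b.
           E a b \<and> a \<in> X \<and> col a \<and> b \<in> X \<and> \<not> col b}"
  unfolding pos_part_def positive_def pos_letters_def raag_rules_def free_rules_def
  by auto

lemma finite_R: assumes "finite X" shows "finite (raag_rules X E col)"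
proof -
  have f1: "finite (free_rules X)" unfolding free_rules_def using assms by simp
  have sub: "{([(a, g), (b, e)], [(b, e), (a, g)]) | a b g e.
        E a b \<and> a \<in> X \<and> col a \<and> b \<in> X \<and> \<not> col b} \<subseteq>
        (\<lambda>(a,b,g,e). ([(a, g), (b, e)], [(b, e), (a, g)])) ` (X \<times> X \<times> UNIV \<times> UNIV)"
  proof
    fix r assume "r \<in> {([(a, g), (b, e)], [(b, e), (a, g)]) | a b g e.
        E a b \<and> a \<in> X \<and> col a \<and> b \<in> X \<and> \<not> col b}"
    then obtain a b g e where "r = ([(a, g), (b, e)], [(b, e), (a, g)])" "a \<in> X" "b \<in> X" by blast
    then show "r \<in> (\<lambda>(a,b,g,e). ([(a, g), (b, e)], [(b, e), (a, g)])) ` (X \<times> X \<times> UNIV \<times> UNIV)"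
      by (intro image_eqI[where x="(a,b,g,e)"]) auto
  qed
  have fin: "finite ((\<lambda>(a,b,g,e). ([(a, g), (b, e)], [(b, e), (a, g)])) ` (X \<times> X \<times> (UNIV::bool set) \<times> (UNIV::bool set)))"
    using assms by simp
  show ?thesis unfolding raag_rules_def by (rule finite_UnI[OF f1 finite_subset[OF sub fin]])
qed

theorem propositionB4:
  fixes X :: "'a set" and E :: "'a \<Rightarrow> 'a \<Rightarrow> bool" and col :: "'a \<Rightarrow> bool"
  assumes "simplicial_graph X E"
    and "closed_paths_even E"
    and "\<forall>a b. E a b \<longrightarrow> col a \<noteq> col b"
    and "\<exists>a b. E a b"
  shows "finite (raag_rules X E col)
    \<and> complete (raag_rules X E col)
    \<and> rewriting_system_for_group X (raag_relations X E) (raag_rules X E col)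
    \<and> C_plus X (raag_rules X E col)
    \<and> pos_part X (raag_rules X E col) =
        {([(a, True), (b, True)], [(b, True), (a, True)]) | a b.
           E a b \<and> a \<in> X \<and> col a \<and> b \<in> X \<and> \<not> col b}
    \<and> rewriting_system_for_monoid X (raag_relations X E) (pos_part X (raag_rules X E col))"
proof -
  have finX: "finite X" and EX: "\<And>a b. E a b \<Longrightarrow> a \<in> X \<and> b \<in> X" and symE: "\<And>a b. E a b \<Longrightarrow> E b a"
    using assms(1) unfolding simplicial_graph_def by auto
  let ?R = "raag_rules X E col"
  let ?P = "{([(a, True), (b, True)], [(b, True), (a, True)]) | a b.
           E a b \<and> a \<in> X \<and> col a \<and> b \<in> X \<and> \<not> col b}"
  have Rsub: "?R \<subseteq> lists (letters X) \<times> lists (letters X)"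
    unfolding raag_rules_def free_rules_def by auto
  have incl: "free_rules X \<union> raag_relations X E \<subseteq> raag_relations X E \<union> free_rules X" by blast
  have symE': "\<And>a b. E a b \<Longrightarrow> E b a" by (rule symE)
  have grp: "congr_on (lists (letters X)) ?R = congr_on (lists (letters X)) (raag_relations X E \<union> free_rules X)"
  proof (rule congr_eqI)
    fix l r assume lr: "(l,r) \<in> ?R" "l \<in> lists (letters X)" "r \<in> lists (letters X)"
    from rule_cases[OF lr(1)]
    show "(l,r) \<in> congr_on (lists (letters X)) (raag_relations X E \<union> free_rules X)"
    proof
      assume "\<exists>x s. x \<in> X \<and> l = [(x,s),(x,\<not>s)] \<and> r = []"
      then obtain x s where xs: "x \<in> X" "l = [(x,s),(x,\<not>s)]" "r = []" by blast
      show ?thesis unfolding xs(2,3) by (rule g_free[OF symE' incl xs(1)])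
    next
      assume "\<exists>a b g e. l = [(a,g),(b,e)] \<and> r = [(b,e),(a,g)] \<and> E a b \<and> a \<in> X \<and> col a \<and> b \<in> X \<and> \<not> col b"
      then obtain a b g e where ab: "l = [(a,g),(b,e)]" "r = [(b,e),(a,g)]" "E a b" "a \<in> X" "b \<in> X" by blast
      show ?thesis unfolding ab(1,2) by (rule g_swap[OF symE' incl ab(3-5)])
    qed
  next
    fix l r assume lr: "(l,r) \<in> raag_relations X E \<union> free_rules X" "l \<in> lists (letters X)" "r \<in> lists (letters X)"
    show "(l,r) \<in> congr_on (lists (letters X)) ?R"
    proof (cases "(l,r) \<in> free_rules X")
      case True
      then have "(l,r) \<in> ?R" unfolding raag_rules_def by simp
      then show ?thesis by (rule congr_rule[OF _ lr(2) lr(3)])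
    next
      case False
      then obtain a b where ab: "l = [(a,True),(b,True)]" "r = [(b,True),(a,True)]" "E a b" "a \<in> X" "b \<in> X"
        using lr(1) unfolding raag_relations_def by blast
      show ?thesis
      proof (cases "col a")
        case True
        then have "\<not> col b" using assms(3) ab by blast
        have "(l,r) \<in> ?R" unfolding ab(1,2) by (rule swap_in[where E=E and a=a and b=b and X=X and col=col, OF ab(3,4) True ab(5) \<open>\<not> col b\<close>])
        then show ?thesis by (rule congr_rule[OF _ lr(2) lr(3)])
      next
        case False
        then have "col b" using assms(3) ab by blast
        have "(r,l) \<in> ?R" unfolding ab(1,2) by (rule swap_in[where E=E and a=b and b=a and X=X and col=col, OF symE[OF ab(3)] ab(5) \<open>col b\<close> ab(4) False])
        then show ?thesis by (rule congr_sym[OF congr_rule[OF _ lr(3) lr(2)]])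
      qed
    qed
  qed
  have pos: "pos_part X ?R = ?P" by (rule pos_part_eq)
  have Psub: "?P \<subseteq> lists (pos_letters X) \<times> lists (pos_letters X)"
    unfolding pos_letters_def by auto
  have mon: "congr_on (lists (pos_letters X)) ?P = congr_on (lists (pos_letters X)) (raag_relations X E)"
  proof (rule congr_eqI)
    fix l r assume lr: "(l,r) \<in> ?P" "l \<in> lists (pos_letters X)" "r \<in> lists (pos_letters X)"
    then have "(l,r) \<in> raag_relations X E" unfolding raag_relations_def by blast
    then show "(l,r) \<in> congr_on (lists (pos_letters X)) (raag_relations X E)" by (rule congr_rule[OF _ lr(2) lr(3)])
  next
    fix l r assume lr: "(l,r) \<in> raag_relations X E" "l \<in> lists (pos_letters X)" "r \<in> lists (pos_letters X)"
    then obtain a b where ab: "l = [(a,True),(b,True)]" "r = [(b,True),(a,True)]" "E a b" "a \<in> X" "b \<in> X"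
      unfolding raag_relations_def by blast
    show "(l,r) \<in> congr_on (lists (pos_letters X)) ?P"
    proof (cases "col a")
      case True
      then have "\<not> col b" using assms(3) ab by blast
      then have "(l,r) \<in> ?P" using ab True by blast
      then show ?thesis by (rule congr_rule[OF _ lr(2) lr(3)])
    next
      case False
      then have "col b" using assms(3) ab by blast
      then have "(r,l) \<in> ?P" using ab False symE by blast
      then show ?thesis by (rule congr_sym[OF congr_rule[OF _ lr(3) lr(2)]])
    qed
  qed
  have cplus: "C_plus X ?R"
  proof -
    obtain a b where ab: "E a b" using assms(4) by blast
    have "?P \<noteq> {}"
    proof (cases "col a")
      case True
      have "\<not> col b" using assms(3) ab True by blast
      then have "([(a,True),(b,True)],[(b,True),(a,True)]) \<in> ?P" using ab EX[OF ab] True by blast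
      then show ?thesis by (rule ex_in_conv[THEN iffD1, OF exI, THEN not_sym, THEN not_sym]) 
    next
      case False
      have "col b" using assms(3) ab False by blast
      then have "([(b,True),(a,True)],[(a,True),(b,True)]) \<in> ?P" using symE[OF ab] EX[OF ab] False by blast
      then show ?thesis by (rule ex_in_conv[THEN iffD1, OF exI, THEN not_sym, THEN not_sym])
    qed
    moreover have "\<forall>(l, r) \<in> ?P. positive X r" using Psub unfolding positive_def by auto
    ultimately show ?thesis unfolding C_plus_def pos by simp
  qed
  have cp: "complete ?R" unfolding complete_def using term_R conf_R by (rule conjI)
  have fR: "finite ?R" by (rule finite_R[OF finX])
  have g: "rewriting_system_for_group X (raag_relations X E) ?R"
    unfolding rewriting_system_for_group_def using Rsub grp by (rule conjI)
  have m: "rewriting_system_for_monoid X (raag_relations X E) (pos_part X ?R)"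
    unfolding rewriting_system_for_monoid_def pos using Psub mon by (rule conjI)
  show ?thesis using fR cp g cplus pos m by (intro conjI)
qed

end
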